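(* Suppose that $\mathfrak{F}$ is a 2-recognizable formation and let $G$ be a finite group. If $\mathcal{I}_\mathfrak{F}(G)$ is a subgroup of $G$ and $G=\mathcal{I}_\mathfrak{F}(G)\langle g\rangle$ for some $g\in G$, then $G\in\mathfrak{F}$.
   Context: A formation is a class of finite groups closed under homomorphic images and subdirect products. $\mathfrak{F}$ is 2-recognizable if a finite group belongs to $\mathfrak{F}$ whenever all its 2-generated subgroups belong to $\mathfrak{F}$. $\mathcal{I}_\mathfrak{F}(G)$ is the set of $x\in G$ such that $\langle x,y\rangle\in\mathfrak{F}$ for all $y\in G$. *)

theory Defs
  imports "HOL-Algebra.Algebra"
begin

text \<open>A class of finite groups is represented (up to isomorphism) by a predicate on
groups whose carrier consists of natural numbers; every finite group is isomorphic
to such a group.\<close>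

definition in_class :: "(nat monoid \<Rightarrow> bool) \<Rightarrow> ('a, 'b) monoid_scheme \<Rightarrow> bool" where
  "in_class F G \<longleftrightarrow> group G \<and> finite (carrier G) \<and>
     (\<exists>H :: nat monoid. F H \<and> group H \<and> finite (carrier H) \<and> G \<cong> H)"

definition formation :: "(nat monoid \<Rightarrow> bool) \<Rightarrow> bool" where
  "formation F \<longleftrightarrow>
     (\<forall>(G :: nat monoid) (H :: nat monoid) h.
        in_class F G \<and> group H \<and> h \<in> hom G H \<and> h ` carrier G = carrier H
        \<longrightarrow> in_class F H) \<and>
     (\<forall>(G :: nat monoid) N1 N2.
        group G \<and> finite (carrier G) \<and> N1 \<lhd> G \<and> N2 \<lhd> G \<and> N1 \<inter> N2 = {\<one>\<^bsub>G\<^esub>} \<and>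
        in_class F (G Mod N1) \<and> in_class F (G Mod N2)
        \<longrightarrow> in_class F G)"

definition two_recognizable :: "(nat monoid \<Rightarrow> bool) \<Rightarrow> bool" where
  "two_recognizable F \<longleftrightarrow>
     (\<forall>G :: nat monoid. group G \<and> finite (carrier G) \<and>
        (\<forall>x\<in>carrier G. \<forall>y\<in>carrier G. in_class F (G\<lparr>carrier := generate G {x, y}\<rparr>))
        \<longrightarrow> in_class F G)"

definition I_F :: "(nat monoid \<Rightarrow> bool) \<Rightarrow> ('a, 'b) monoid_scheme \<Rightarrow> 'a set" where
  "I_F F G = {x \<in> carrier G. \<forall>y\<in>carrier G. in_class F (G\<lparr>carrier := generate G {x, y}\<rparr>)}"

end

theory Submission
  imports Defs
begin

lemma in_class_iso:
  assumes "in_class F G" "G \<cong> K" "group K"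
  shows "in_class F K"
proof -
  from assms(1) obtain H :: "nat monoid" where H: "F H" "group H" "finite (carrier H)" "G \<cong> H"
    and G: "group G" "finite (carrier G)" unfolding in_class_def by blast
  have "K \<cong> G" using group.iso_sym[OF G(1) assms(2)] .
  hence "K \<cong> H" using H(4) iso_trans by blast
  moreover have "finite (carrier K)" using iso_finite[OF assms(2)] G(2) by simp
  ultimately show ?thesis using H assms(3) unfolding in_class_def by blast
qed

lemma nat_copy:
  fixes G :: "('a, 'b) monoid_scheme"
  assumes "group G" "finite (carrier G)"
  shows "\<exists>(H :: nat monoid) \<phi>. group H \<and> finite (carrier H) \<and> \<phi> \<in> iso G H"
proof -
  interpret group G by fact
  obtain f where f: "bij_betw f (carrier G) {0..<card (carrier G)}"
    using ex_bij_betw_finite_nat[OF assms(2)] by blast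
  define h where "h = inv_into (carrier G) f"
  have inj: "inj_on f (carrier G)" using f bij_betw_def by blast
  have hf: "\<And>x. x \<in> carrier G \<Longrightarrow> h (f x) = x" unfolding h_def using inj by simp
  have hc: "\<And>y. y \<in> f ` carrier G \<Longrightarrow> h y \<in> carrier G" unfolding h_def
    by (simp add: inv_into_into)
  have fh: "\<And>y. y \<in> f ` carrier G \<Longrightarrow> f (h y) = y" unfolding h_def
    by (simp add: f_inv_into_f)
  define H :: "nat monoid" where "H = \<lparr>carrier = f ` carrier G, monoid.mult = (\<lambda>x y. f (h x \<otimes>\<^bsub>G\<^esub> h y)), monoid.one = f \<one>\<^bsub>G\<^esub>\<rparr>"
  have iso: "f \<in> iso G H"
    unfolding iso_def hom_def H_def bij_betw_def using inj by (auto simp: hf)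
  have mon: "monoid H"
  proof
    fix x y z assume x: "x \<in> carrier H" and y: "y \<in> carrier H" and z: "z \<in> carrier H"
    show "x \<otimes>\<^bsub>H\<^esub> y \<in> carrier H" using x y hc by (auto simp: H_def)
    show "x \<otimes>\<^bsub>H\<^esub> y \<otimes>\<^bsub>H\<^esub> z = x \<otimes>\<^bsub>H\<^esub> (y \<otimes>\<^bsub>H\<^esub> z)"
      using x y z hc hf by (simp add: H_def m_assoc)
  next
    show "\<one>\<^bsub>H\<^esub> \<in> carrier H" by (simp add: H_def)
  next
    fix x assume x: "x \<in> carrier H"
    show "\<one>\<^bsub>H\<^esub> \<otimes>\<^bsub>H\<^esub> x = x" using x hc hf fh by (simp add: H_def)
    show "x \<otimes>\<^bsub>H\<^esub> \<one>\<^bsub>H\<^esub> = x" using x hc hf fh by (simp add: H_def)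
  qed
  have "group H" using iso_imp_group[OF is_isoI[OF iso] mon] .
  moreover have "finite (carrier H)" using assms(2) by (simp add: H_def)
  ultimately show ?thesis using iso by blast
qed

lemma recog_transfer:
  fixes G :: "('a, 'b) monoid_scheme"
  assumes "two_recognizable F" "group G" "finite (carrier G)"
    and all: "\<forall>x\<in>carrier G. \<forall>y\<in>carrier G. in_class F (G\<lparr>carrier := generate G {x, y}\<rparr>)"
  shows "in_class F G"
proof -
  interpret group G by fact
  obtain H :: "nat monoid" and \<phi> where H: "group H" "finite (carrier H)" "\<phi> \<in> iso G H"
    using nat_copy[OF assms(2,3)] by blast
  interpret gh: group_hom G H \<phi>
    using H iso_imp_homomorphism[OF H(3)] assms(2)
    by (simp add: group_hom_def group_hom_axioms_def Group.iso_def)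
  have surj: "\<phi> ` carrier G = carrier H" using H(3) by (simp add: Group.iso_def bij_betw_def)
  have "\<forall>u\<in>carrier H. \<forall>v\<in>carrier H. in_class F (H\<lparr>carrier := generate H {u, v}\<rparr>)"
  proof (intro ballI)
    fix u v assume "u \<in> carrier H" "v \<in> carrier H"
    then obtain x y where xy: "x \<in> carrier G" "y \<in> carrier G" "u = \<phi> x" "v = \<phi> y"
      using surj by blast
    have sub: "subgroup (generate G {x, y}) G" using xy by (intro generate_is_subgroup) auto
    have gen: "generate H {u, v} = \<phi> ` generate G {x, y}"
      using gh.generate_img[of "{x,y}"] xy by simp
    have "restrict \<phi> (generate G {x, y}) \<in> iso (G\<lparr>carrier := generate G {x, y}\<rparr>) (H\<lparr>carrier := \<phi> ` generate G {x, y}\<rparr>)"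
      using iso_restrict[OF H(3) assms(2) H(1) sub] .
    hence "G\<lparr>carrier := generate G {x, y}\<rparr> \<cong> H\<lparr>carrier := generate H {u, v}\<rparr>"
      using gen is_isoI by metis
    moreover have "group (H\<lparr>carrier := generate H {u, v}\<rparr>)"
      using gen subgroup.subgroup_is_group[OF gh.subgroup_img_is_subgroup[OF sub] H(1)] by simp
    ultimately show "in_class F (H\<lparr>carrier := generate H {u, v}\<rparr>)"
      using in_class_iso all xy by blast
  qed
  hence "in_class F H" using assms(1) H unfolding two_recognizable_def by blast
  moreover have "H \<cong> G" using iso_sym is_isoI[OF H(3)] by blast
  ultimately show ?thesis using in_class_iso assms(2) by blast
qed

theorem lemma4p1:
  fixes F :: "nat monoid \<Rightarrow> bool" and G :: "'a monoid" and g :: 'a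
  assumes "formation F" and "two_recognizable F"
    and "group G" and "finite (carrier G)"
    and "subgroup (I_F F G) G"
    and "g \<in> carrier G"
    and "carrier G = I_F F G <#>\<^bsub>G\<^esub> generate G {g}"
  shows "in_class F G"
proof -
  interpret group G by fact
  let ?I = "I_F F G"
  have Isub: "?I \<subseteq> carrier G" unfolding I_F_def by blast
  have gsub: "generate G {g} \<subseteq> carrier G" using assms(6) generate_incl by simp
  have gI: "g \<in> ?I"
    unfolding I_F_def
  proof (intro CollectI conjI ballI assms(6))
    fix y assume y: "y \<in> carrier G"
    then obtain a c where ac: "a \<in> ?I" "c \<in> generate G {g}" "y = a \<otimes>\<^bsub>G\<^esub> c"
      using assms(7) unfolding set_mult_def by blast
    have a: "a \<in> carrier G" and c: "c \<in> carrier G" using ac Isub gsub by auto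
    have cga: "c \<in> generate G {g, a}" using ac(2) mono_generate[of "{g}" "{g,a}"] by auto
    have s1: "subgroup (generate G {g, a}) G" using a assms(6) by (intro generate_is_subgroup) auto
    have s2: "subgroup (generate G {g, y}) G" using y assms(6) by (intro generate_is_subgroup) auto
    have "generate G {g, y} \<subseteq> generate G {g, a}"
    proof (rule generate_subgroup_incl[OF _ s1])
      have "g \<in> generate G {g, a}" "a \<in> generate G {g, a}" by (auto intro: generate.incl)
      thus "{g, y} \<subseteq> generate G {g, a}" using ac(3) cga subgroup.m_closed[OF s1] by auto
    qed
    moreover have "generate G {g, a} \<subseteq> generate G {g, y}"
    proof (rule generate_subgroup_incl[OF _ s2])
      have cgy: "c \<in> generate G {g, y}" using ac(2) mono_generate[of "{g}" "{g,y}"] by auto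
      have "a = y \<otimes>\<^bsub>G\<^esub> inv\<^bsub>G\<^esub> c" using ac(3) a c by (simp add: m_assoc)
      moreover have "y \<in> generate G {g, y}" "g \<in> generate G {g, y}" by (auto intro: generate.incl)
      ultimately show "{g, a} \<subseteq> generate G {g, y}"
        using cgy subgroup.m_closed[OF s2] subgroup.m_inv_closed[OF s2] by auto
    qed
    ultimately have eq: "generate G {g, y} = generate G {a, g}" by (auto simp: insert_commute)
    have "in_class F (G\<lparr>carrier := generate G {a, g}\<rparr>)"
      using ac(1) assms(6) unfolding I_F_def by blast
    thus "in_class F (G\<lparr>carrier := generate G {g, y}\<rparr>)" using eq by simp
  qed
  have "generate G {g} \<subseteq> ?I" using gI generate_subgroup_incl[OF _ assms(5)] by auto
  hence "carrier G \<subseteq> ?I" using assms(7) subgroup.m_closed[OF assms(5)]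
    unfolding set_mult_def by auto
  hence "\<forall>x\<in>carrier G. \<forall>y\<in>carrier G. in_class F (G\<lparr>carrier := generate G {x, y}\<rparr>)"
    unfolding I_F_def by blast
  thus ?thesis using recog_transfer[OF assms(2,3,4)] by blast
qed

end
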